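(* Let $f:\mathcal{P}_2(H)\to U$ and $X_0\in L^2(\Omega,H)$ with $\mu_0=\mathcal{L}(X_0)=\sum_{k=1}^Np_k\delta_{x_k}$, $x_1,\dots,x_N\in H$ distinct, $p_k>0$, $\sum_kp_k=1$. Assume the lift $\hat f(X)=f(\mathcal{L}(X))$ is Fréchet differentiable at $X_0$ with $D\hat f(X_0)\in\Lambda_2^{\mathbb{P}}(H,U)$; let $m(A)u:=D\hat f(X_0)(u\mathbf{1}_A)$ and $m_{\mu_0}(B):=m(\{X_0\in B\})$ for Borel $B\subset H$. Then $$\frac{dm_{\mu_0}}{d\mu_0}(x):=\sum_{k=1}^N\frac{m_{\mu_0}(\{x_k\})}{\mu_0(\{x_k\})}\mathbf{1}_{\{x_k\}}(x)$$ satisfies $\mathbb{E}\big[\mathbf{1}_A\frac{dm_{\mu_0}}{d\mu_0}(X_0)\big]=m(A)$ for all $A\in\mathcal{F}$ (Bochner integral in $L(H,U)$).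
   Context: $(\Omega,\mathcal{F},\mathbb{P})$ is a complete atomless probability space, $\Omega$ Polish with Borel $\sigma$-field; $H,U$ separable real Hilbert spaces; $L(H,U)$ with operator norm. For bounded linear $L:L^2(\Omega,H)\to U$, $|\!|\!|L|\!|\!|_{2,\mathbb{P}}:=\sup\{\sum_i\|L(\mathbf{1}_{A_i}x_i)\|_U:A_i\in\mathcal{F}$ pairwise disjoint, $x_i\in H$, $\mathbb{E}\|\sum_i\mathbf{1}_{A_i}x_i\|_H^2\le1\}$, and $\Lambda_2^{\mathbb{P}}(H,U)$ is the set of such $L$ with finite norm; for such $L$, $A\mapsto L(\cdot\,\mathbf{1}_A)$ is a vector measure $\mathcal{F}\to L(H,U)$. *)

theory Defs
  imports "HOL-Analysis.Analysis" "HOL-Probability.Probability"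
begin

definition standing_prob_space :: "('a::polish_space) measure \<Rightarrow> bool" where
  "standing_prob_space M \<longleftrightarrow> prob_space M \<and> space M = UNIV \<and>
     (\<exists>M'. sets M' = sets borel \<and> M = completion M') \<and>
     (\<forall>A\<in>sets M. 0 < measure M A \<longrightarrow>
        (\<exists>B\<in>sets M. B \<subseteq> A \<and> 0 < measure M B \<and> measure M B < measure M A))"

definition L2 :: "'a measure \<Rightarrow> ('a \<Rightarrow> 'h::real_normed_vector) set" where
  "L2 M = {X. X \<in> borel_measurable M \<and> integrable M (\<lambda>\<omega>. (norm (X \<omega>))\<^sup>2)}"

definition L2norm :: "'a measure \<Rightarrow> ('a \<Rightarrow> 'h::real_normed_vector) \<Rightarrow> real" where
  "L2norm M X = sqrt (\<integral>\<omega>. (norm (X \<omega>))\<^sup>2 \<partial>M)"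

definition lift :: "'a measure \<Rightarrow> ('h::topological_space measure \<Rightarrow> 'u) \<Rightarrow> ('a \<Rightarrow> 'h) \<Rightarrow> 'u" where
  "lift M f X = f (distr M borel X)"

definition frechet_L2 ::
  "'a measure \<Rightarrow> (('a \<Rightarrow> 'h::real_normed_vector) \<Rightarrow> 'u::real_normed_vector) \<Rightarrow> ('a \<Rightarrow> 'h)
     \<Rightarrow> (('a \<Rightarrow> 'h) \<Rightarrow> 'u) \<Rightarrow> bool" where
  "frechet_L2 M F X0 DF \<longleftrightarrow>
     (\<forall>Y\<in>L2 M. \<forall>Z\<in>L2 M. DF (\<lambda>\<omega>. Y \<omega> + Z \<omega>) = DF Y + DF Z) \<and>
     (\<forall>Y\<in>L2 M. \<forall>c::real. DF (\<lambda>\<omega>. c *\<^sub>R Y \<omega>) = c *\<^sub>R DF Y) \<and>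
     (\<exists>C. \<forall>Y\<in>L2 M. norm (DF Y) \<le> C * L2norm M Y) \<and>
     (\<forall>e>0. \<exists>d>0. \<forall>Y\<in>L2 M. L2norm M Y < d \<longrightarrow>
        norm (F (\<lambda>\<omega>. X0 \<omega> + Y \<omega>) - F X0 - DF Y) \<le> e * L2norm M Y)"

definition lambda2_norm ::
  "'a measure \<Rightarrow> (('a \<Rightarrow> 'h::real_normed_vector) \<Rightarrow> 'u::real_normed_vector) \<Rightarrow> ennreal" where
  "lambda2_norm M L = Sup {ennreal (\<Sum>i<n. norm (L (\<lambda>\<omega>. indicator (A i) \<omega> *\<^sub>R x i))) | n A x.
      disjoint_family_on A {..<n::nat} \<and> (\<forall>i<n. A i \<in> sets M) \<and>
      (\<integral>\<omega>. (norm (\<Sum>i<n. indicator (A i) \<omega> *\<^sub>R x i))\<^sup>2 \<partial>M) \<le> 1}"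

definition in_Lambda2 ::
  "'a measure \<Rightarrow> (('a \<Rightarrow> 'h::real_normed_vector) \<Rightarrow> 'u::real_normed_vector) \<Rightarrow> bool" where
  "in_Lambda2 M L \<longleftrightarrow> lambda2_norm M L < \<top>"

definition vmeas ::
  "(('a \<Rightarrow> 'h::real_normed_vector) \<Rightarrow> 'u::real_normed_vector) \<Rightarrow> 'a set \<Rightarrow> 'h \<Rightarrow>\<^sub>L 'u" where
  "vmeas DF A = Blinfun (\<lambda>u. DF (\<lambda>\<omega>. indicator A \<omega> *\<^sub>R u))"

definition vmeas_push ::
  "'a measure \<Rightarrow> (('a \<Rightarrow> 'h::real_normed_vector) \<Rightarrow> 'u::real_normed_vector) \<Rightarrow> ('a \<Rightarrow> 'h) \<Rightarrow> 'h set \<Rightarrow> 'h \<Rightarrow>\<^sub>L 'u" where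
  "vmeas_push M DF X0 B = vmeas DF (X0 -` B \<inter> space M)"

end

theory Submission
  imports Defs
begin

lemma small_subset:
  fixes M :: "'a measure"
  assumes fm: "finite_measure M"
    and al: "\<forall>A\<in>sets M. 0 < measure M A \<longrightarrow> (\<exists>B\<in>sets M. B \<subseteq> A \<and> 0 < measure M B \<and> measure M B < measure M A)"
    and F: "F \<in> sets M" "0 < measure M F"
  shows "\<exists>G\<in>sets M. G \<subseteq> F \<and> 0 < measure M G \<and> measure M G \<le> measure M F / 2 ^ n"
proof (induction n)
  case 0
  show ?case using F by (intro bexI[of _ F]) auto
next
  case (Suc n)
  then obtain G where G: "G \<in> sets M" "G \<subseteq> F" "0 < measure M G" "measure M G \<le> measure M F / 2 ^ n" by blast
  then obtain B where B: "B \<in> sets M" "B \<subseteq> G" "0 < measure M B" "measure M B < measure M G"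
    using al by blast
  have D: "measure M (G - B) = measure M G - measure M B"
    using finite_measure.finite_measure_Diff[OF fm G(1) B(1) B(2)] by simp
  have G2: "measure M G / 2 \<le> measure M F / 2 ^ n / 2" using G(4) by (simp add: divide_right_mono)
  show ?case
  proof (cases "measure M B \<le> measure M G / 2")
    case True
    have "measure M B \<le> (measure M F / 2 ^ n) / 2" using True G2 by linarith
    then have "measure M B \<le> measure M F / 2 ^ Suc n" by (simp add: divide_divide_eq_left mult.commute)
    then show ?thesis using B G by (intro bexI[of _ B]) auto
  next
    case False
    have "measure M (G - B) \<le> (measure M F / 2 ^ n) / 2" using False G2 D by linarith
    then have "measure M (G - B) \<le> measure M F / 2 ^ Suc n" by (simp add: divide_divide_eq_left mult.commute)
    moreover have "0 < measure M (G - B)" using D B by simp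
    ultimately show ?thesis using B G by (intro bexI[of _ "G - B"]) auto
  qed
qed

lemma small_subset_eps:
  fixes M :: "'a measure"
  assumes fm: "finite_measure M"
    and al: "\<forall>A\<in>sets M. 0 < measure M A \<longrightarrow> (\<exists>B\<in>sets M. B \<subseteq> A \<and> 0 < measure M B \<and> measure M B < measure M A)"
    and F: "F \<in> sets M" "0 < measure M F" and e: "0 < e"
  shows "\<exists>G\<in>sets M. G \<subseteq> F \<and> 0 < measure M G \<and> measure M G < e"
proof -
  obtain n where n: "measure M F / e < 2 ^ n" using real_arch_pow[of 2 "measure M F / e"] by auto
  then have "measure M F / 2 ^ n < e" using e by (simp add: field_simps)
  moreover obtain G where "G\<in>sets M" "G \<subseteq> F" "0 < measure M G" "measure M G \<le> measure M F / 2 ^ n"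
    using small_subset[OF fm al F, of n] by blast
  ultimately show ?thesis by (intro bexI[of _ G]) auto
qed

lemma exact_subset:
  fixes M :: "'a measure"
  assumes fm: "finite_measure M"
    and al: "\<forall>A\<in>sets M. 0 < measure M A \<longrightarrow> (\<exists>B\<in>sets M. B \<subseteq> A \<and> 0 < measure M B \<and> measure M B < measure M A)"
    and F: "F \<in> sets M" and t: "0 \<le> t" "t \<le> measure M F"
  shows "\<exists>G\<in>sets M. G \<subseteq> F \<and> measure M G = t"
proof -
  interpret finite_measure M by fact
  define cand where "cand U = {G. G \<in> sets M \<and> G \<subseteq> F - U \<and> measure M G \<le> t - measure M U}" for U
  define sp where "sp U = Sup (measure M ` cand U)" for U
  define step where "step U = (SOME G. G \<in> cand U \<and> sp U / 2 \<le> measure M G)" for U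
  have bdd: "bdd_above (measure M ` cand U)" for U
    by (rule bdd_aboveI[of _ "measure M F"]) (use F in \<open>auto simp: cand_def intro!: finite_measure_mono\<close>)
  have step: "step U \<in> cand U \<and> sp U / 2 \<le> measure M (step U)"
    if U: "U \<in> sets M" "measure M U \<le> t" for U
  proof -
    have ne: "{} \<in> cand U" using U by (auto simp: cand_def)
    have "\<exists>G. G \<in> cand U \<and> sp U / 2 \<le> measure M G"
    proof (cases "sp U \<le> 0")
      case True
      then show ?thesis using ne by (intro exI[of _ "{}"]) auto
    next
      case False
      then have "sp U / 2 < Sup (measure M ` cand U)" by (simp add: sp_def)
      then obtain y where "y \<in> measure M ` cand U" "sp U / 2 < y"
        using less_cSup_iff[OF _ bdd] ne by blast
      then show ?thesis by (auto intro: less_imp_le)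
    qed
    then show ?thesis unfolding step_def by (rule someI_ex)
  qed
  define U where "U = rec_nat {} (\<lambda>_ V. V \<union> step V)"
  have U0: "U 0 = {}" and US: "U (Suc n) = U n \<union> step (U n)" for n
    by (simp_all add: U_def)
  have inv: "U n \<in> sets M \<and> U n \<subseteq> F \<and> measure M (U n) \<le> t" for n
  proof (induction n)
    case 0
    then show ?case using t by (simp add: U0)
  next
    case (Suc n)
    then have st: "step (U n) \<in> cand (U n)" using step[of "U n"] by blast
    then have st': "step (U n) \<in> sets M" "step (U n) \<subseteq> F - U n" "measure M (step (U n)) \<le> t - measure M (U n)"
      by (auto simp: cand_def)
    have "measure M (U (Suc n)) = measure M (U n) + measure M (step (U n))"
      unfolding US using Suc st' by (intro finite_measure_Union) auto
    then show ?case using Suc st' by (auto simp: US)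
  qed
  have stepn: "step (U n) \<in> cand (U n)" "sp (U n) / 2 \<le> measure M (step (U n))" for n
    using step[of "U n"] inv[of n] by blast+
  have meq: "measure M (U (Suc n)) = measure M (U n) + measure M (step (U n))" for n
    unfolding US using inv stepn by (intro finite_measure_Union) (auto simp: cand_def)
  define W where "W = (\<Union>n. U n)"
  have inc: "incseq U" by (rule incseq_SucI) (auto simp: US)
  have rng: "range U \<subseteq> sets M" using inv by auto
  have lim: "(\<lambda>n. measure M (U n)) \<longlonglongrightarrow> measure M W"
    unfolding W_def by (rule finite_Lim_measure_incseq[OF rng inc])
  have W: "W \<in> sets M" "W \<subseteq> F" using inv by (auto simp: W_def)
  have Wt: "measure M W \<le> t"
    by (rule LIMSEQ_le_const2[OF lim]) (use inv in auto)
  have UW: "U n \<subseteq> W" for n by (auto simp: W_def)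
  have lim0: "(\<lambda>n. measure M (step (U n))) \<longlonglongrightarrow> 0"
  proof -
    have "(\<lambda>n. measure M (U (Suc n)) - measure M (U n)) \<longlonglongrightarrow> measure M W - measure M W"
      by (intro tendsto_diff LIMSEQ_Suc lim)
    then show ?thesis by (simp add: meq)
  qed
  have "measure M W = t"
  proof (rule ccontr)
    assume "measure M W \<noteq> t"
    then have lt: "measure M W < t" using Wt by simp
    have "measure M (F - W) = measure M F - measure M W"
      using W F by (intro finite_measure_Diff) auto
    then have pos: "0 < measure M (F - W)" using lt t by simp
    obtain G' where G': "G' \<in> sets M" "G' \<subseteq> F - W" "0 < measure M G'" "measure M G' < t - measure M W"
      using small_subset_eps[OF fm al _ pos, of "t - measure M W"] sets.Diff[OF F W(1)] lt by auto
    have "measure M G' / 2 \<le> measure M (step (U n))" for n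
    proof -
      have m: "measure M (U n) \<le> measure M W" using finite_measure_mono[OF UW[of n] W(1)] .
      have "G' \<subseteq> F - U n" using G'(2) UW[of n] by blast
      then have "G' \<in> cand (U n)" using G'(1,4) m unfolding cand_def by simp
      then have "measure M G' \<le> sp (U n)" unfolding sp_def by (rule cSup_upper[OF imageI bdd])
      then show ?thesis using stepn(2)[of n] by linarith
    qed
    then have "measure M G' / 2 \<le> 0"
      by (intro LIMSEQ_le_const[OF lim0] exI[of _ 0] allI impI)
    then show False using G' by simp
  qed
  then show ?thesis using W by blast
qed


locale dfl =
  fixes M :: "'a measure" and DF :: "('a \<Rightarrow> 'h::{real_normed_vector, second_countable_topology}) \<Rightarrow> 'u::real_normed_vector" and C :: real
  assumes ps: "prob_space M"
  and add: "\<forall>Y\<in>L2 M. \<forall>Z\<in>L2 M. DF (\<lambda>\<omega>. Y \<omega> + Z \<omega>) = DF Y + DF Z"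
  and scl: "\<forall>Y\<in>L2 M. \<forall>c::real. DF (\<lambda>\<omega>. c *\<^sub>R Y \<omega>) = c *\<^sub>R DF Y"
  and bnd: "\<forall>Y\<in>L2 M. norm (DF Y) \<le> C * L2norm M Y"
  and C: "0 \<le> C"
begin

interpretation prob_space M by (rule ps)

lemma ind_L2: "A \<in> sets M \<Longrightarrow> (\<lambda>\<omega>. indicator A \<omega> *\<^sub>R (u::'h)) \<in> L2 M"
  unfolding L2_def
proof safe
  assume A[measurable]: "A \<in> sets M"
  show "(\<lambda>\<omega>. indicator A \<omega> *\<^sub>R u) \<in> borel_measurable M" by measurable
  show "integrable M (\<lambda>\<omega>. (norm (indicator A \<omega> *\<^sub>R u))\<^sup>2)"
    by (rule integrable_const_bound[where B="(norm u)\<^sup>2"]) (auto simp: indicator_def)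
qed

lemma ind_norm: "A \<in> sets M \<Longrightarrow> L2norm M (\<lambda>\<omega>. indicator A \<omega> *\<^sub>R (u::'h)) = norm u * sqrt (measure M A)"
proof -
  assume A[measurable]: "A \<in> sets M"
  have "(\<lambda>\<omega>. (norm (indicator A \<omega> *\<^sub>R u))\<^sup>2) = (\<lambda>\<omega>. indicator A \<omega> * (norm u)\<^sup>2)"
    by (auto simp: indicator_def)
  then have "(\<integral>\<omega>. (norm (indicator A \<omega> *\<^sub>R u))\<^sup>2 \<partial>M) = measure M A * (norm u)\<^sup>2"
    by simp
  then show ?thesis unfolding L2norm_def by (simp add: real_sqrt_mult mult.commute)
qed

lemma DF_ind_bounded: "A \<in> sets M \<Longrightarrow> bounded_linear (\<lambda>u. DF (\<lambda>\<omega>. indicator A \<omega> *\<^sub>R u))"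
proof -
  assume A: "A \<in> sets M"
  show ?thesis
  proof (rule bounded_linear_intro[where K="C * sqrt (measure M A)"])
    fix u v :: 'h
    have "DF (\<lambda>\<omega>. indicator A \<omega> *\<^sub>R (u + v)) = DF (\<lambda>\<omega>. indicator A \<omega> *\<^sub>R u + indicator A \<omega> *\<^sub>R v)"
      by (simp add: scaleR_right_distrib)
    also have "\<dots> = DF (\<lambda>\<omega>. indicator A \<omega> *\<^sub>R u) + DF (\<lambda>\<omega>. indicator A \<omega> *\<^sub>R v)"
      using add[rule_format, OF ind_L2[OF A, of u] ind_L2[OF A, of v]] by simp
    finally show "DF (\<lambda>\<omega>. indicator A \<omega> *\<^sub>R (u + v)) = DF (\<lambda>\<omega>. indicator A \<omega> *\<^sub>R u) + DF (\<lambda>\<omega>. indicator A \<omega> *\<^sub>R v)" .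
  next
    fix r :: real and u :: 'h
    have "DF (\<lambda>\<omega>. indicator A \<omega> *\<^sub>R (r *\<^sub>R u)) = DF (\<lambda>\<omega>. r *\<^sub>R (indicator A \<omega> *\<^sub>R u))"
      by (simp add: ac_simps)
    also have "\<dots> = r *\<^sub>R DF (\<lambda>\<omega>. indicator A \<omega> *\<^sub>R u)"
      using scl[rule_format, OF ind_L2[OF A, of u], of r] by simp
    finally show "DF (\<lambda>\<omega>. indicator A \<omega> *\<^sub>R (r *\<^sub>R u)) = r *\<^sub>R DF (\<lambda>\<omega>. indicator A \<omega> *\<^sub>R u)" .
  next
    fix u :: 'h
    have "norm (DF (\<lambda>\<omega>. indicator A \<omega> *\<^sub>R u)) \<le> C * L2norm M (\<lambda>\<omega>. indicator A \<omega> *\<^sub>R u)"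
      using bnd ind_L2[OF A] by blast
    then show "norm (DF (\<lambda>\<omega>. indicator A \<omega> *\<^sub>R u)) \<le> norm u * (C * sqrt (measure M A))"
      by (simp add: ind_norm[OF A] ac_simps)
  qed
qed

lemma vm_apply: "A \<in> sets M \<Longrightarrow> blinfun_apply (vmeas DF A) (u::'h) = DF (\<lambda>\<omega>. indicator A \<omega> *\<^sub>R u)"
  unfolding vmeas_def by (simp add: bounded_linear_Blinfun_apply DF_ind_bounded)

lemma vm_norm: "A \<in> sets M \<Longrightarrow> norm (vmeas DF A) \<le> C * sqrt (measure M A)"
proof -
  assume A: "A \<in> sets M"
  show ?thesis
  proof (rule norm_blinfun_bound)
    show "0 \<le> C * sqrt (measure M A)" using C by simp
    fix u
    have "norm (DF (\<lambda>\<omega>. indicator A \<omega> *\<^sub>R u)) \<le> C * L2norm M (\<lambda>\<omega>. indicator A \<omega> *\<^sub>R u)"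
      using bnd ind_L2[OF A] by blast
    then show "norm (blinfun_apply (vmeas DF A) u) \<le> C * sqrt (measure M A) * norm u"
      by (simp add: vm_apply[OF A] ind_norm[OF A] ac_simps)
  qed
qed

lemma test1: "1 *\<^sub>R (u::'h) = 1 *\<^sub>R u + 0 *\<^sub>R u" by simp

lemma vm_null: "A \<in> sets M \<Longrightarrow> measure M A = 0 \<Longrightarrow> vmeas DF A = 0"
  using vm_norm[of A] by simp

lemma vm_union:
  assumes A: "A \<in> sets M" and B: "B \<in> sets M" and d: "A \<inter> B = {}"
  shows "vmeas DF (A \<union> B) = vmeas DF A + vmeas DF B"
proof (rule blinfun_eqI)
  fix u :: 'h
  have AB: "A \<union> B \<in> sets M" using A B by auto
  have "(\<lambda>\<omega>. indicator (A \<union> B) \<omega> *\<^sub>R u) = (\<lambda>\<omega>. indicator A \<omega> *\<^sub>R u + indicator B \<omega> *\<^sub>R u)"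
    using d by (auto simp: indicator_def fun_eq_iff)
  then have "DF (\<lambda>\<omega>. indicator (A \<union> B) \<omega> *\<^sub>R u) = DF (\<lambda>\<omega>. indicator A \<omega> *\<^sub>R u) + DF (\<lambda>\<omega>. indicator B \<omega> *\<^sub>R u)"
    using add[rule_format, OF ind_L2[OF A, of u] ind_L2[OF B, of u]] by simp
  then show "blinfun_apply (vmeas DF (A \<union> B)) u = blinfun_apply (vmeas DF A + vmeas DF B) u"
    by (simp add: vm_apply A B AB blinfun.add_left)
qed

lemma vm_linear:
  assumes al: "\<forall>A\<in>sets M. 0 < measure M A \<longrightarrow> (\<exists>B\<in>sets M. B \<subseteq> A \<and> 0 < measure M B \<and> measure M B < measure M A)"
    and E: "E \<in> sets M" "0 < measure M E"
    and inv: "\<And>A B. A \<in> sets M \<Longrightarrow> B \<in> sets M \<Longrightarrow> A \<subseteq> E \<Longrightarrow> B \<subseteq> E \<Longrightarrow> measure M A = measure M B \<Longrightarrow> vmeas DF A = vmeas DF B"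
    and A: "A \<in> sets M" "A \<subseteq> E"
  shows "vmeas DF A = (measure M A / measure M E) *\<^sub>R vmeas DF E"
proof -
  have fm: "finite_measure M" by (rule finite_measure_axioms)
  define p where "p = measure M E"
  have p: "0 < p" using E by (simp add: p_def)
  define S where "S s = (SOME G. G \<in> sets M \<and> G \<subseteq> E \<and> measure M G = s)" for s
  have S: "S s \<in> sets M \<and> S s \<subseteq> E \<and> measure M (S s) = s" if "0 \<le> s" "s \<le> p" for s
    unfolding S_def by (rule someI_ex) (use exact_subset[OF fm al E(1), of s] that p_def in auto)
  define \<phi> where "\<phi> s = vmeas DF (S s)" for s
  have \<phi>G: "\<phi> (measure M G) = vmeas DF G" if G: "G \<in> sets M" "G \<subseteq> E" for G
  proof -
    have "measure M G \<le> p" unfolding p_def using G E by (intro finite_measure_mono) auto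
    then have "S (measure M G) \<in> sets M \<and> S (measure M G) \<subseteq> E \<and> measure M (S (measure M G)) = measure M G"
      by (intro S) auto
    then show ?thesis unfolding \<phi>_def using G by (intro inv) auto
  qed
  have \<phi>add: "\<phi> (s + t) = \<phi> s + \<phi> t" if st: "0 \<le> s" "0 \<le> t" "s + t \<le> p" for s t
  proof -
    define G where "G = S (s + t)"
    have G: "G \<in> sets M" "G \<subseteq> E" "measure M G = s + t" using S[of "s + t"] st by (auto simp: G_def)
    obtain G1 where G1: "G1 \<in> sets M" "G1 \<subseteq> G" "measure M G1 = s"
      using exact_subset[OF fm al G(1), of s] st G(3) by auto
    have D: "measure M (G - G1) = t" using finite_measure_Diff[OF G(1) G1(1) G1(2)] G(3) G1(3) by simp
    have "G = G1 \<union> (G - G1)" using G1 by auto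
    then have "vmeas DF G = vmeas DF G1 + vmeas DF (G - G1)"
      using vm_union[of G1 "G - G1"] G G1 by auto
    moreover have "\<phi> (s + t) = vmeas DF G" using \<phi>G[OF G(1,2)] G(3) by simp
    moreover have "\<phi> s = vmeas DF G1" using \<phi>G[of G1] G1 G by auto
    moreover have "\<phi> t = vmeas DF (G - G1)" using \<phi>G[of "G - G1"] G1 G D by auto
    ultimately show ?thesis by simp
  qed
  have \<phi>0: "\<phi> 0 = 0"
    unfolding \<phi>_def using S[of 0] p by (intro vm_null) auto
  have \<phi>mult: "\<phi> (real n * a) = real n *\<^sub>R \<phi> a" if "0 \<le> a" "real n * a \<le> p" for n a
    using that
  proof (induction n)
    case 0
    then show ?case by (simp add: \<phi>0)
  next
    case (Suc n)
    have le: "real n * a \<le> p" using Suc.prems by (simp add: distrib_right) 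
    have "\<phi> (real (Suc n) * a) = \<phi> (real n * a + a)" by (simp add: distrib_right add.commute)
    also have "\<dots> = \<phi> (real n * a) + \<phi> a"
      using Suc.prems by (intro \<phi>add) (auto simp: distrib_right)
    also have "\<dots> = real (Suc n) *\<^sub>R \<phi> a" using Suc.IH[OF Suc.prems(1) le] by (simp add: scaleR_left_distrib)
    finally show ?case .
  qed
  have \<phi>frac: "\<phi> (real m * (p / real n)) = (real m / real n) *\<^sub>R \<phi> p" if "1 \<le> n" "m \<le> n" for m n
  proof -
    have "\<phi> (real n * (p / real n)) = real n *\<^sub>R \<phi> (p / real n)"
      using that p by (intro \<phi>mult) auto
    then have 1: "\<phi> p = real n *\<^sub>R \<phi> (p / real n)" using that by simp
    have "real m * (p / real n) \<le> real n * (p / real n)" using that p by (intro mult_right_mono) auto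
    then have "\<phi> (real m * (p / real n)) = real m *\<^sub>R \<phi> (p / real n)"
      using that p by (intro \<phi>mult) auto
    also have "\<dots> = (real m / real n) *\<^sub>R \<phi> p" using 1 that by (simp add: divide_inverse)
    finally show ?thesis .
  qed
  have \<phi>bnd: "norm (\<phi> r) \<le> C * sqrt r" if "0 \<le> r" "r \<le> p" for r
    using vm_norm[of "S r"] S[OF that] unfolding \<phi>_def by auto
  define s where "s = measure M A"
  have s: "0 \<le> s" "s \<le> p" unfolding s_def p_def using A E by (auto intro!: finite_measure_mono)
  have \<phi>s: "\<phi> s = vmeas DF A" unfolding s_def using \<phi>G A by simp
  have \<phi>p: "\<phi> p = vmeas DF E" unfolding p_def using \<phi>G E by simp
  define K where "K = norm (\<phi> p)"
  have key: "norm (\<phi> s - (s / p) *\<^sub>R \<phi> p) \<le> C * sqrt (p / real n) + K / real n" if n: "1 \<le> n" for n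
  proof -
    define m where "m = nat \<lfloor>s * real n / p\<rfloor>"
    have nn: "0 \<le> s * real n / p" using s p by auto
    have m1: "real m \<le> s * real n / p" unfolding m_def using nn by (simp add: of_nat_nat)
    have m2: "s * real n / p < real m + 1" unfolding m_def using nn by (simp add: of_nat_nat)
    have "s * real n / p \<le> real n" using s p by (simp add: field_simps mult_right_mono)
    then have mn: "m \<le> n" using m1 by linarith
    define q where "q = real m * (p / real n)"
    define r where "r = s - q"
    have q: "q \<le> s" using m1 n p unfolding q_def by (simp add: field_simps)
    have n0: "0 < real n" using n by simp
    have "s * real n < (real m + 1) * p" using m2 p by (simp add: field_simps)
    then have "s < (real m + 1) * p / real n" using n0 by (simp add: field_simps)
    moreover have "(real m + 1) * p / real n = real m * (p / real n) + p / real n" by (simp add: add_divide_distrib distrib_right)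
    ultimately have r: "r < p / real n" unfolding r_def q_def by linarith
    have q0: "0 \<le> q" using p unfolding q_def by simp
    have r0: "0 \<le> r" using q unfolding r_def by simp
    have "\<phi> s = \<phi> (q + r)" by (simp add: r_def)
    also have "\<dots> = \<phi> q + \<phi> r" using q0 r0 s by (intro \<phi>add) (auto simp: r_def)
    also have "\<phi> q = (real m / real n) *\<^sub>R \<phi> p" unfolding q_def using \<phi>frac n mn by blast
    finally have e1: "\<phi> s = (real m / real n) *\<^sub>R \<phi> p + \<phi> r" .
    have e2: "s / p = real m / real n + r / p" unfolding r_def q_def using p n by (simp add: field_simps)
    have "\<phi> s - (s / p) *\<^sub>R \<phi> p = \<phi> r - (r / p) *\<^sub>R \<phi> p"
      unfolding e1 e2 by (simp add: scaleR_left_distrib)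
    also have "norm \<dots> \<le> norm (\<phi> r) + norm ((r / p) *\<^sub>R \<phi> p)" by (rule norm_triangle_ineq4)
    also have "\<dots> \<le> C * sqrt (p / real n) + K / real n"
    proof (rule add_mono)
      have "p / real n \<le> p / 1" by (rule divide_left_mono) (use p n in auto)
      then have "r \<le> p" using r by simp
      then have "norm (\<phi> r) \<le> C * sqrt r" using \<phi>bnd r0 by blast
      also have "\<dots> \<le> C * sqrt (p / real n)" using C r by (intro mult_left_mono) auto
      finally show "norm (\<phi> r) \<le> C * sqrt (p / real n)" .
      have "norm ((r / p) *\<^sub>R \<phi> p) = (r / p) * K" using r0 p by (simp add: K_def)
      also have "\<dots> \<le> (1 / real n) * K" unfolding K_def using r p
        by (intro mult_right_mono) (auto simp: field_simps)
      finally show "norm ((r / p) *\<^sub>R \<phi> p) \<le> K / real n" by simp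
    qed
    finally show ?thesis .
  qed
  have lim: "(\<lambda>n. C * sqrt (p / real n) + K / real n) \<longlonglongrightarrow> C * sqrt 0 + 0"
    by (intro tendsto_add tendsto_mult tendsto_const tendsto_real_sqrt lim_const_over_n)
  have "norm (\<phi> s - (s / p) *\<^sub>R \<phi> p) \<le> C * sqrt 0 + 0"
    by (rule LIMSEQ_le_const[OF lim]) (use key in auto)
  then have "\<phi> s = (s / p) *\<^sub>R \<phi> p" by simp
  then show ?thesis using \<phi>s \<phi>p by (simp add: s_def p_def)
qed

end

lemma sbi_ind:
  fixes M :: "'a measure" and c :: "'b::real_normed_vector"
  assumes fm: "finite_measure M" and S: "S \<in> sets M"
  shows "Bochner_Integration.simple_bochner_integrable M (\<lambda>\<omega>. indicator S \<omega> *\<^sub>R c) \<and>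
         Bochner_Integration.simple_bochner_integral M (\<lambda>\<omega>. indicator S \<omega> *\<^sub>R c) = measure M S *\<^sub>R c"
proof -
  interpret finite_measure M by fact
  have si: "Bochner_Integration.simple_bochner_integrable M (indicator S :: 'a \<Rightarrow> real)"
    by (rule simple_bochner_integrable.intros) (use S in auto)
  have 1: "Bochner_Integration.simple_bochner_integrable M (\<lambda>\<omega>. indicator S \<omega> *\<^sub>R c)"
    by (rule simple_bochner_integrable.intros) (use S in \<open>auto intro: simple_function_compose1\<close>)
  have "Bochner_Integration.simple_bochner_integral M (\<lambda>\<omega>. indicator S \<omega> *\<^sub>R c) = Bochner_Integration.simple_bochner_integral M (indicator S :: 'a \<Rightarrow> real) *\<^sub>R c"
    by (rule simple_bochner_integral_linear[OF bounded_linear.linear[OF bounded_linear_scaleR_left] si])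
  also have "Bochner_Integration.simple_bochner_integral M (indicator S :: 'a \<Rightarrow> real) = measure M S"
    using simple_bochner_integrable_eq_integral[OF si] S by (simp add: Int_absorb2 sets.sets_into_space)
  finally show ?thesis using 1 by simp
qed

lemma sbi_sum:
  fixes M :: "'a measure" and f :: "'i \<Rightarrow> 'a \<Rightarrow> 'b::real_normed_vector"
  assumes I: "finite I" and f: "\<And>i. i \<in> I \<Longrightarrow> Bochner_Integration.simple_bochner_integrable M (f i)"
  shows "Bochner_Integration.simple_bochner_integrable M (\<lambda>\<omega>. \<Sum>i\<in>I. f i \<omega>) \<and>
         Bochner_Integration.simple_bochner_integral M (\<lambda>\<omega>. \<Sum>i\<in>I. f i \<omega>) = (\<Sum>i\<in>I. Bochner_Integration.simple_bochner_integral M (f i))"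
  using I f
proof (induction I rule: finite_induct)
  case empty
  have "Bochner_Integration.simple_bochner_integrable M (\<lambda>\<omega>. 0 :: 'b)"
    by (rule simple_bochner_integrable.intros) auto
  moreover have "Bochner_Integration.simple_bochner_integral M (\<lambda>\<omega>. 0 :: 'b) = 0"
    by (auto simp: simple_bochner_integral_def intro!: sum.neutral)
  ultimately show ?case by simp
next
  case (insert i I)
  then have IH: "Bochner_Integration.simple_bochner_integrable M (\<lambda>\<omega>. \<Sum>i\<in>I. f i \<omega>)"
    "Bochner_Integration.simple_bochner_integral M (\<lambda>\<omega>. \<Sum>i\<in>I. f i \<omega>) = (\<Sum>i\<in>I. Bochner_Integration.simple_bochner_integral M (f i))" by auto
  have fi: "Bochner_Integration.simple_bochner_integrable M (f i)" using insert by auto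
  have "Bochner_Integration.simple_bochner_integrable M (\<lambda>\<omega>. f i \<omega> + (\<Sum>i\<in>I. f i \<omega>))"
    by (rule simple_bochner_integrable_compose2[where p="(+)", OF _ fi IH(1)]) simp
  moreover have "Bochner_Integration.simple_bochner_integral M (\<lambda>\<omega>. f i \<omega> + (\<Sum>i\<in>I. f i \<omega>)) =
      Bochner_Integration.simple_bochner_integral M (f i) + Bochner_Integration.simple_bochner_integral M (\<lambda>\<omega>. \<Sum>i\<in>I. f i \<omega>)"
    by (rule simple_bochner_integral_add[OF fi IH(1)])
  ultimately show ?case using insert IH(2) by simp
qed

context dfl begin

interpretation prob_space M by (rule ps)

lemma vm_UN:
  assumes I: "finite I" and S: "\<And>i. i \<in> I \<Longrightarrow> S i \<in> sets M" and d: "disjoint_family_on S I"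
  shows "vmeas DF (\<Union>i\<in>I. S i) = (\<Sum>i\<in>I. vmeas DF (S i))"
  using I S d
proof (induction I rule: finite_induct)
  case empty
  then show ?case using vm_null[of "{}"] by simp
next
  case (insert i I)
  have d: "disjoint_family_on S I" using insert.prems(2) by (auto simp: disjoint_family_on_def)
  have "(\<Union>j\<in>insert i I. S j) = S i \<union> (\<Union>j\<in>I. S j)" by auto
  moreover have "S i \<inter> (\<Union>j\<in>I. S j) = {}"
    using insert.prems(2) insert.hyps(2) by (auto simp: disjoint_family_on_def)
  moreover have "(\<Union>j\<in>I. S j) \<in> sets M" using insert.prems(1) insert.hyps(1) by auto
  ultimately have "vmeas DF (\<Union>j\<in>insert i I. S j) = vmeas DF (S i) + vmeas DF (\<Union>j\<in>I. S j)"
    using vm_union[of "S i" "\<Union>j\<in>I. S j"] insert.prems(1) by auto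
  then show ?case using insert d by simp
qed

lemma shift_measure:
  fixes X0 :: "'a \<Rightarrow> 'h"
  assumes X0: "X0 \<in> borel_measurable M" and A: "A \<in> sets M" "A \<subseteq> X0 -` {a}" and Cb: "Q \<in> sets borel"
  shows "measure M ((\<lambda>\<omega>. X0 \<omega> + indicator A \<omega> *\<^sub>R v) -` Q \<inter> space M) =
     (if a + v \<in> Q then measure M A else 0) + measure M (X0 -` Q \<inter> space M) - (if a \<in> Q then measure M A else 0)"
proof -
  have XC: "X0 -` Q \<inter> space M \<in> sets M" using X0 Cb by (rule measurable_sets)
  have As: "A \<subseteq> space M" using A sets.sets_into_space by auto
  have eq: "(\<lambda>\<omega>. X0 \<omega> + indicator A \<omega> *\<^sub>R v) -` Q \<inter> space M = (if a + v \<in> Q then A else {}) \<union> ((X0 -` Q \<inter> space M) - A)"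
    using A As by (auto split: split_indicator split_indicator_asm)
  have int: "(X0 -` Q \<inter> space M) \<inter> A = (if a \<in> Q then A else {})" using A As by auto
  have "measure M ((if a + v \<in> Q then A else {}) \<union> ((X0 -` Q \<inter> space M) - A)) =
        measure M (if a + v \<in> Q then A else {}) + measure M ((X0 -` Q \<inter> space M) - A)"
    using A XC by (intro finite_measure_Union) auto
  also have "measure M ((X0 -` Q \<inter> space M) - A) = measure M (X0 -` Q \<inter> space M) - measure M ((X0 -` Q \<inter> space M) \<inter> A)"
    using XC A by (intro finite_measure_Diff') auto
  finally show ?thesis unfolding eq int by auto
qed

lemma shift_distr:
  fixes X0 :: "'a \<Rightarrow> 'h"
  assumes X0: "X0 \<in> borel_measurable M" and A: "A \<in> sets M" "A \<subseteq> X0 -` {a}"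
    and B: "B \<in> sets M" "B \<subseteq> X0 -` {a}" and AB: "measure M A = measure M B"
  shows "distr M borel (\<lambda>\<omega>. X0 \<omega> + indicator A \<omega> *\<^sub>R v) = distr M borel (\<lambda>\<omega>. X0 \<omega> + indicator B \<omega> *\<^sub>R v)"
proof (rule measure_eqI)
  show "sets (distr M borel (\<lambda>\<omega>. X0 \<omega> + indicator A \<omega> *\<^sub>R v)) = sets (distr M borel (\<lambda>\<omega>. X0 \<omega> + indicator B \<omega> *\<^sub>R v))"
    by simp
  fix Q assume "Q \<in> sets (distr M borel (\<lambda>\<omega>. X0 \<omega> + indicator A \<omega> *\<^sub>R v))"
  then have Cb: "Q \<in> sets borel" by simp
  have mA: "(\<lambda>\<omega>. X0 \<omega> + indicator A \<omega> *\<^sub>R v) \<in> borel_measurable M" using X0 A by measurable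
  have mB: "(\<lambda>\<omega>. X0 \<omega> + indicator B \<omega> *\<^sub>R v) \<in> borel_measurable M" using X0 B by measurable
  show "emeasure (distr M borel (\<lambda>\<omega>. X0 \<omega> + indicator A \<omega> *\<^sub>R v)) Q = emeasure (distr M borel (\<lambda>\<omega>. X0 \<omega> + indicator B \<omega> *\<^sub>R v)) Q"
    using shift_measure[OF X0 A Cb, of v] shift_measure[OF X0 B Cb, of v] AB
    by (simp add: emeasure_distr[OF mA Cb] emeasure_distr[OF mB Cb] emeasure_eq_measure)
qed

lemma vm_inv:
  fixes X0 :: "'a \<Rightarrow> 'h" and f :: "'h measure \<Rightarrow> 'u"
  assumes X0: "X0 \<in> borel_measurable M"
    and fr: "\<forall>e>0. \<exists>d>0. \<forall>Y\<in>L2 M. L2norm M Y < d \<longrightarrow>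
        norm (lift M f (\<lambda>\<omega>. X0 \<omega> + Y \<omega>) - lift M f X0 - DF Y) \<le> e * L2norm M Y"
    and A: "A \<in> sets M" "A \<subseteq> X0 -` {a}"
    and B: "B \<in> sets M" "B \<subseteq> X0 -` {a}" and AB: "measure M A = measure M B"
  shows "vmeas DF A = vmeas DF B"
proof (rule blinfun_eqI)
  fix u :: 'h
  define s where "s = measure M A"
  define L where "L = norm u * sqrt s"
  have L0: "0 \<le> L" by (simp add: L_def s_def)
  define w where "w = DF (\<lambda>\<omega>. indicator A \<omega> *\<^sub>R u) - DF (\<lambda>\<omega>. indicator B \<omega> *\<^sub>R u)"
  have "w = 0"
  proof (cases "L = 0")
    case True
    have "norm (DF (\<lambda>\<omega>. indicator A \<omega> *\<^sub>R u)) \<le> C * L2norm M (\<lambda>\<omega>. indicator A \<omega> *\<^sub>R u)"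
      using bnd ind_L2[OF A(1), of u] by blast
    moreover have "norm (DF (\<lambda>\<omega>. indicator B \<omega> *\<^sub>R u)) \<le> C * L2norm M (\<lambda>\<omega>. indicator B \<omega> *\<^sub>R u)"
      using bnd ind_L2[OF B(1), of u] by blast
    moreover have "L2norm M (\<lambda>\<omega>. indicator A \<omega> *\<^sub>R u) = 0" "L2norm M (\<lambda>\<omega>. indicator B \<omega> *\<^sub>R u) = 0"
      using True by (simp_all add: ind_norm A(1) B(1) AB L_def s_def)
    ultimately show ?thesis unfolding w_def by simp
  next
    case False
    then have Lp: "0 < L" using L0 by simp
    have bound: "norm w \<le> 2 * e * L" if e: "0 < e" for e
    proof -
      obtain d where d: "d > 0" and dY: "\<forall>Y\<in>L2 M. L2norm M Y < d \<longrightarrow>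
        norm (lift M f (\<lambda>\<omega>. X0 \<omega> + Y \<omega>) - lift M f X0 - DF Y) \<le> e * L2norm M Y"
        using fr e by blast
      define t where "t = d / (2 * L)"
      have t: "0 < t" using d Lp by (simp add: t_def)
      have tL: "t * L < d" using d Lp by (simp add: t_def)
      define YA where "YA = (\<lambda>\<omega>. indicator A \<omega> *\<^sub>R (t *\<^sub>R u))"
      define YB where "YB = (\<lambda>\<omega>. indicator B \<omega> *\<^sub>R (t *\<^sub>R u))"
      have YA: "YA \<in> L2 M" "L2norm M YA = t * L"
        unfolding YA_def ind_norm[OF A(1)] using ind_L2[OF A(1), of "t *\<^sub>R u"] t by (auto simp: L_def s_def)
      have YB: "YB \<in> L2 M" "L2norm M YB = t * L"
        unfolding YB_def ind_norm[OF B(1)] using ind_L2[OF B(1), of "t *\<^sub>R u"] t by (auto simp: L_def s_def AB)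
      have eA: "norm (lift M f (\<lambda>\<omega>. X0 \<omega> + YA \<omega>) - lift M f X0 - DF YA) \<le> e * (t * L)"
        using dY YA tL by auto
      have eB: "norm (lift M f (\<lambda>\<omega>. X0 \<omega> + YB \<omega>) - lift M f X0 - DF YB) \<le> e * (t * L)"
        using dY YB tL by auto
      have same: "lift M f (\<lambda>\<omega>. X0 \<omega> + YA \<omega>) = lift M f (\<lambda>\<omega>. X0 \<omega> + YB \<omega>)"
        unfolding lift_def YA_def YB_def by (simp only: shift_distr[OF X0 A B AB, of "t *\<^sub>R u"])
      have DA: "DF YA = t *\<^sub>R DF (\<lambda>\<omega>. indicator A \<omega> *\<^sub>R u)"
      proof -
        have "YA = (\<lambda>\<omega>. t *\<^sub>R (indicator A \<omega> *\<^sub>R u))" unfolding YA_def by (simp add: fun_eq_iff)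
        then show ?thesis using scl[rule_format, OF ind_L2[OF A(1), of u], of t] by simp
      qed
      have DB: "DF YB = t *\<^sub>R DF (\<lambda>\<omega>. indicator B \<omega> *\<^sub>R u)"
      proof -
        have "YB = (\<lambda>\<omega>. t *\<^sub>R (indicator B \<omega> *\<^sub>R u))" unfolding YB_def by (simp add: fun_eq_iff)
        then show ?thesis using scl[rule_format, OF ind_L2[OF B(1), of u], of t] by simp
      qed
      have "t *\<^sub>R w = (lift M f (\<lambda>\<omega>. X0 \<omega> + YB \<omega>) - lift M f X0 - DF YB) - (lift M f (\<lambda>\<omega>. X0 \<omega> + YA \<omega>) - lift M f X0 - DF YA)"
        unfolding w_def DA DB same by (simp add: algebra_simps)
      then have "norm (t *\<^sub>R w) \<le> norm (lift M f (\<lambda>\<omega>. X0 \<omega> + YB \<omega>) - lift M f X0 - DF YB) + norm (lift M f (\<lambda>\<omega>. X0 \<omega> + YA \<omega>) - lift M f X0 - DF YA)"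
        by (simp only: norm_triangle_ineq4)
      then have "norm (t *\<^sub>R w) \<le> e * (t * L) + e * (t * L)"
        using eA eB by linarith
      then have "t * norm w \<le> t * (2 * e * L)" using t by (simp add: algebra_simps)
      then show ?thesis using t by simp
    qed
    show "w = 0"
    proof (rule ccontr)
      assume "w \<noteq> 0"
      then have nw: "0 < norm w" by simp
      have "norm w \<le> 2 * (norm w / (4 * L)) * L" using bound[of "norm w / (4 * L)"] nw Lp by simp
      also have "\<dots> = norm w / 2" using Lp by (simp add: field_simps)
      finally show False using nw by simp
    qed
  qed
  then show "blinfun_apply (vmeas DF A) u = blinfun_apply (vmeas DF B) u"
    by (simp add: vm_apply A(1) B(1) w_def)
qed

end

theorem lemma3p4:
  fixes M :: "('a::polish_space) measure"
    and f :: "('h::{real_inner, complete_space, second_countable_topology}) measure \<Rightarrow>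
              ('u::{real_inner, complete_space, second_countable_topology})"
    and X0 :: "'a \<Rightarrow> 'h"
    and N :: nat and x :: "nat \<Rightarrow> 'h" and p :: "nat \<Rightarrow> real"
    and DF :: "('a \<Rightarrow> 'h) \<Rightarrow> 'u"
  assumes "standing_prob_space M"
    and "X0 \<in> L2 M"
    and "inj_on x {..<N}"
    and "\<forall>k<N. p k > 0"
    and "(\<Sum>k<N. p k) = 1"
    and "\<forall>B\<in>sets borel. measure (distr M borel X0) B = (\<Sum>k\<in>{k. k < N \<and> x k \<in> B}. p k)"
    and "frechet_L2 M (lift M f) X0 DF"
    and "in_Lambda2 M DF"
  shows "\<forall>A\<in>sets M.
     Bochner_Integration.simple_bochner_integrable M
       (\<lambda>\<omega>. indicator A \<omega> *\<^sub>R
          (\<Sum>k<N. indicator {x k} (X0 \<omega>) *\<^sub>R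
                    ((1 / measure (distr M borel X0) {x k}) *\<^sub>R vmeas_push M DF X0 {x k})))
     \<and> Bochner_Integration.simple_bochner_integral M
       (\<lambda>\<omega>. indicator A \<omega> *\<^sub>R
          (\<Sum>k<N. indicator {x k} (X0 \<omega>) *\<^sub>R
                    ((1 / measure (distr M borel X0) {x k}) *\<^sub>R vmeas_push M DF X0 {x k})))
       = vmeas DF A"
proof -
  have ps: "prob_space M" and sp: "space M = UNIV"
    and al: "\<forall>A\<in>sets M. 0 < measure M A \<longrightarrow> (\<exists>B\<in>sets M. B \<subseteq> A \<and> 0 < measure M B \<and> measure M B < measure M A)"
    using assms(1) unfolding standing_prob_space_def by auto
  interpret prob_space M by (rule ps)
  have fm: "finite_measure M" by (rule finite_measure_axioms)
  have X0m: "X0 \<in> borel_measurable M" using assms(2) by (simp add: L2_def)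
  have add: "\<forall>Y\<in>L2 M. \<forall>Z\<in>L2 M. DF (\<lambda>\<omega>. Y \<omega> + Z \<omega>) = DF Y + DF Z"
    and scl: "\<forall>Y\<in>L2 M. \<forall>c::real. DF (\<lambda>\<omega>. c *\<^sub>R Y \<omega>) = c *\<^sub>R DF Y"
    and bex: "\<exists>C. \<forall>Y\<in>L2 M. norm (DF Y) \<le> C * L2norm M Y"
    and fr: "\<forall>e>0. \<exists>d>0. \<forall>Y\<in>L2 M. L2norm M Y < d \<longrightarrow>
        norm (lift M f (\<lambda>\<omega>. X0 \<omega> + Y \<omega>) - lift M f X0 - DF Y) \<le> e * L2norm M Y"
    using assms(7) unfolding frechet_L2_def by auto
  obtain C0 where C0: "\<forall>Y\<in>L2 M. norm (DF Y) \<le> C0 * L2norm M Y" using bex by blast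
  define C where "C = max C0 0"
  have bnd: "\<forall>Y\<in>L2 M. norm (DF Y) \<le> C * L2norm M Y"
  proof
    fix Y :: "'a \<Rightarrow> 'h" assume Y: "Y \<in> L2 M"
    have "0 \<le> L2norm M Y" unfolding L2norm_def by (simp add: integral_nonneg)
    then have "C0 * L2norm M Y \<le> C * L2norm M Y" unfolding C_def by (intro mult_right_mono) auto
    moreover have "norm (DF Y) \<le> C0 * L2norm M Y" using C0 Y by blast
    ultimately show "norm (DF Y) \<le> C * L2norm M Y" by linarith
  qed
  interpret D: dfl M DF C
    by (rule dfl.intro[OF ps add scl bnd]) (simp add: C_def)
  define E where "E k = X0 -` {x k} \<inter> space M" for k
  have Es: "E k \<in> sets M" for k unfolding E_def by (rule measurable_sets[OF X0m]) simp
  have muk: "measure (distr M borel X0) {x k} = p k" if k: "k < N" for k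
  proof -
    have "{j. j < N \<and> x j \<in> {x k}} = {k}" using assms(3) k by (auto simp: inj_on_def)
    moreover have "{x k} \<in> sets borel" by (intro borel_closed) simp
    ultimately show ?thesis using assms(6)[rule_format, of "{x k}"] by simp
  qed
  have pk: "measure M (E k) = p k" if k: "k < N" for k
    using muk[OF k] measure_distr[OF X0m, of "{x k}"] by (simp add: E_def)
  have disj: "disjoint_family_on E {..<N}"
    unfolding disjoint_family_on_def E_def using assms(3) by (auto simp: inj_on_def)
  have full: "measure M (\<Union>k<N. E k) = 1"
  proof -
    have fin: "x ` {..<N} \<in> sets borel" by (intro borel_closed finite_imp_closed) auto
    have "(\<Union>k<N. E k) = X0 -` (x ` {..<N}) \<inter> space M" by (auto simp: E_def)
    moreover have "{j. j < N \<and> x j \<in> x ` {..<N}} = {..<N}" by auto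
    ultimately show ?thesis using assms(6)[rule_format, OF fin] measure_distr[OF X0m fin] assms(5) by simp
  qed
  have inv: "\<And>S T. S \<in> sets M \<Longrightarrow> T \<in> sets M \<Longrightarrow> S \<subseteq> E k \<Longrightarrow> T \<subseteq> E k \<Longrightarrow> measure M S = measure M T \<Longrightarrow> vmeas DF S = vmeas DF T" for k
    by (rule D.vm_inv[OF X0m fr]) (auto simp: E_def)
  show ?thesis
  proof
    fix A assume A: "A \<in> sets M"
    define c where "c k = (1 / measure (distr M borel X0) {x k}) *\<^sub>R vmeas_push M DF X0 {x k}" for k
    have feq: "(\<lambda>\<omega>. indicator A \<omega> *\<^sub>R
          (\<Sum>k<N. indicator {x k} (X0 \<omega>) *\<^sub>R
                    ((1 / measure (distr M borel X0) {x k}) *\<^sub>R vmeas_push M DF X0 {x k})))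
        = (\<lambda>\<omega>. \<Sum>k<N. indicator (A \<inter> E k) \<omega> *\<^sub>R c k)"
    proof
      fix \<omega>
      show "indicator A \<omega> *\<^sub>R
          (\<Sum>k<N. indicator {x k} (X0 \<omega>) *\<^sub>R
                    ((1 / measure (distr M borel X0) {x k}) *\<^sub>R vmeas_push M DF X0 {x k}))
        = (\<Sum>k<N. indicator (A \<inter> E k) \<omega> *\<^sub>R c k)"
        unfolding scaleR_sum_right c_def
        by (intro sum.cong refl) (simp add: E_def sp indicator_def)
    qed
    have terms: "Bochner_Integration.simple_bochner_integrable M (\<lambda>\<omega>. indicator (A \<inter> E k) \<omega> *\<^sub>R c k) \<and>
        Bochner_Integration.simple_bochner_integral M (\<lambda>\<omega>. indicator (A \<inter> E k) \<omega> *\<^sub>R c k) = measure M (A \<inter> E k) *\<^sub>R c k" for k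
      using sbi_ind[OF fm, of "A \<inter> E k" "c k"] A Es by auto
    have S: "Bochner_Integration.simple_bochner_integrable M (\<lambda>\<omega>. \<Sum>k<N. indicator (A \<inter> E k) \<omega> *\<^sub>R c k) \<and>
        Bochner_Integration.simple_bochner_integral M (\<lambda>\<omega>. \<Sum>k<N. indicator (A \<inter> E k) \<omega> *\<^sub>R c k) = (\<Sum>k<N. measure M (A \<inter> E k) *\<^sub>R c k)"
      using sbi_sum[of "{..<N}" M "\<lambda>k \<omega>. indicator (A \<inter> E k) \<omega> *\<^sub>R c k"] terms by simp
    have lin: "measure M (A \<inter> E k) *\<^sub>R c k = vmeas DF (A \<inter> E k)" if k: "k < N" for k
    proof -
      have "vmeas_push M DF X0 {x k} = vmeas DF (E k)" by (simp add: vmeas_push_def E_def)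
      then have ck: "c k = (1 / measure M (E k)) *\<^sub>R vmeas DF (E k)" by (simp add: c_def muk[OF k] pk[OF k])
      have "vmeas DF (A \<inter> E k) = (measure M (A \<inter> E k) / measure M (E k)) *\<^sub>R vmeas DF (E k)"
        by (rule D.vm_linear[OF al Es _ inv]) (use A Es pk[OF k] assms(4) k in auto)
      then show ?thesis by (simp add: ck)
    qed
    have "(\<Sum>k<N. measure M (A \<inter> E k) *\<^sub>R c k) = (\<Sum>k<N. vmeas DF (A \<inter> E k))"
      by (intro sum.cong refl lin) simp
    also have "\<dots> = vmeas DF (\<Union>k<N. A \<inter> E k)"
      by (rule D.vm_UN[symmetric]) (use A Es disj in \<open>auto simp: disjoint_family_on_def\<close>)
    also have "\<dots> = vmeas DF A"
    proof -
      have U: "(\<Union>k<N. A \<inter> E k) \<in> sets M" using A Es by auto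
      have R: "A - (\<Union>k<N. A \<inter> E k) \<in> sets M" using A Es by auto
      have "measure M (A - (\<Union>k<N. A \<inter> E k)) \<le> measure M (space M - (\<Union>k<N. E k))"
      proof -
        have Rs: "space M - (\<Union>k<N. E k) \<in> sets M" using Es by auto
        have sub: "A - (\<Union>k<N. A \<inter> E k) \<subseteq> space M - (\<Union>k<N. E k)" using sets.sets_into_space[OF A] by auto
        show ?thesis by (rule finite_measure_mono[OF sub Rs])
      qed
      also have "\<dots> = 0" using prob_compl[of "\<Union>k<N. E k"] Es full by auto
      finally have "measure M (A - (\<Union>k<N. A \<inter> E k)) = 0" by (simp add: measure_nonneg antisym)
      then have z: "vmeas DF (A - (\<Union>k<N. A \<inter> E k)) = 0" using D.vm_null R by simp
      have "A = (\<Union>k<N. A \<inter> E k) \<union> (A - (\<Union>k<N. A \<inter> E k))" by auto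
      then have "vmeas DF A = vmeas DF (\<Union>k<N. A \<inter> E k) + vmeas DF (A - (\<Union>k<N. A \<inter> E k))"
        using D.vm_union[OF U R] by auto
      then show ?thesis using z by simp
    qed
    finally show "Bochner_Integration.simple_bochner_integrable M
       (\<lambda>\<omega>. indicator A \<omega> *\<^sub>R
          (\<Sum>k<N. indicator {x k} (X0 \<omega>) *\<^sub>R
                    ((1 / measure (distr M borel X0) {x k}) *\<^sub>R vmeas_push M DF X0 {x k})))
     \<and> Bochner_Integration.simple_bochner_integral M
       (\<lambda>\<omega>. indicator A \<omega> *\<^sub>R
          (\<Sum>k<N. indicator {x k} (X0 \<omega>) *\<^sub>R
                    ((1 / measure (distr M borel X0) {x k}) *\<^sub>R vmeas_push M DF X0 {x k})))
       = vmeas DF A"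
      unfolding feq using S by simp
  qed
qed

end
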